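(* Under the standing setup below, every antichain in the forcing notion $Q$ is countable.
   Context: For $\lambda>1$, an injection $f$ is $\lambda$-bi-Lipschitz if for all distinct $a,b$ in its domain $d(f(a),f(b))<\lambda d(a,b)$ and $d(a,b)<\lambda d(f(a),f(b))$. Standing setup: $\{A_\alpha:\alpha<\omega_3\}$ are subsets of $\omega_1$, each of cardinality $\aleph_1$, with $A_\alpha\cap A_\beta$ finite for $\alpha\ne\beta$; each $A_\alpha$ is partitioned as $A_\alpha=\bigcup_{i<\omega_1}A_{\alpha,i}$ into pairwise disjoint countably infinite sets; $\langle d_\alpha:\alpha<\omega_3\rangle$ is a sequence of metrics on $\omega_1$ with each $(\omega_1,d_\alpha)$ separable. The forcing $Q$: a condition is $p=\langle w^p,u^p,d^p,\bar f^p,\bar\varepsilon^p\rangle$ where $w^p\subseteq\omega_3$ is finite; $u^p\subseteq\omega_1$ is finite and $d^p$ is a rational-valued metric on $u^p$; $\bar\varepsilon^p=\langle\varepsilon^p_\alpha:\alpha\in w^p\rangle$ are rationals in $(0,1)$; $\bar f^p=\langle f^p_\alpha:\alpha\in w^p\rangle$ where each $f^p_\alpha$ is a function from a finite subset of $\omega_1$ into $u^p$ with $f^p_\alpha(i)\in A_{\alpha,i}$ for $i\in\operatorname{dom}f^p_\alpha$, and $f^p_\alpha$ is $(1+\varepsilon^p_\alpha)$-bi-Lipschitz from $(\operatorname{dom}f^p_\alpha,d_\alpha)$ to $(u^p,d^p)$. Order: $p\le q$ iff $w^p\subseteq w^q$, $u^p\subseteq u^q$, $d^q$ extends $d^p$,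 and for all $\alpha\in w^p$, $\varepsilon^q_\alpha=\varepsilon^p_\alpha$ and $f^p_\alpha\subseteq f^q_\alpha$. Two conditions are incompatible if they have no common extension; an antichain is a set of pairwise incompatible conditions. *)

theory Defs
  imports Complex_Main "HOL-Library.Countable_Set"
begin

text \<open>The type 'w plays the role of omega_1 (as a bare set, cardinality aleph_1),
the type 'k plays the role of omega_3 (index set, cardinality aleph_3).\<close>

definition aleph1_type :: "'w itself \<Rightarrow> bool" where
  "aleph1_type _ \<longleftrightarrow> (card_of (UNIV :: 'w set), cardSuc natLeq) \<in> ordIso"

definition aleph3_type :: "'k itself \<Rightarrow> bool" where
  "aleph3_type _ \<longleftrightarrow> (card_of (UNIV :: 'k set), cardSuc (cardSuc (cardSuc natLeq))) \<in> ordIso"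

definition metric_on :: "'w set \<Rightarrow> ('w \<Rightarrow> 'w \<Rightarrow> 'r::linordered_field) \<Rightarrow> bool" where
  "metric_on S d \<longleftrightarrow>
     (\<forall>x\<in>S. \<forall>y\<in>S. 0 \<le> d x y \<and> (d x y = 0 \<longleftrightarrow> x = y) \<and> d x y = d y x) \<and>
     (\<forall>x\<in>S. \<forall>y\<in>S. \<forall>z\<in>S. d x z \<le> d x y + d y z)"

definition separable_metric :: "('w \<Rightarrow> 'w \<Rightarrow> real) \<Rightarrow> bool" where
  "separable_metric d \<longleftrightarrow>
     (\<exists>D. countable D \<and> (\<forall>x. \<forall>e>0. \<exists>y\<in>D. d x y < e))"

definition bi_lipschitz :: "real \<Rightarrow> ('w \<Rightarrow> 'w \<Rightarrow> real) \<Rightarrow> ('w \<Rightarrow> 'w \<Rightarrow> real) \<Rightarrow> ('w \<rightharpoonup> 'w) \<Rightarrow> bool" where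
  "bi_lipschitz lam d1 d2 f \<longleftrightarrow>
     inj_on (\<lambda>i. the (f i)) (dom f) \<and>
     (\<forall>a\<in>dom f. \<forall>b\<in>dom f. a \<noteq> b \<longrightarrow>
        d2 (the (f a)) (the (f b)) < lam * d1 a b \<and> d1 a b < lam * d2 (the (f a)) (the (f b)))"

text \<open>Conditions of Q, stored canonically: outside w the functions are empty and
epsilon is 0; the metric d is 0 outside u x u.\<close>
record ('k, 'w) cond =
  cw :: "'k set"
  cu :: "'w set"
  cd :: "'w \<Rightarrow> 'w \<Rightarrow> rat"
  cf :: "'k \<Rightarrow> ('w \<rightharpoonup> 'w)"
  ceps :: "'k \<Rightarrow> rat"

definition is_cond ::
  "('k \<Rightarrow> 'w \<Rightarrow> 'w set) \<Rightarrow> ('k \<Rightarrow> 'w \<Rightarrow> 'w \<Rightarrow> real) \<Rightarrow> ('k, 'w) cond \<Rightarrow> bool" where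
  "is_cond Apart dd p \<longleftrightarrow>
     finite (cw p) \<and> finite (cu p) \<and>
     metric_on (cu p) (cd p) \<and>
     (\<forall>x y. (x \<notin> cu p \<or> y \<notin> cu p) \<longrightarrow> cd p x y = 0) \<and>
     (\<forall>\<alpha>. \<alpha> \<notin> cw p \<longrightarrow> cf p \<alpha> = Map.empty \<and> ceps p \<alpha> = 0) \<and>
     (\<forall>\<alpha>\<in>cw p. 0 < ceps p \<alpha> \<and> ceps p \<alpha> < 1 \<and>
        finite (dom (cf p \<alpha>)) \<and> ran (cf p \<alpha>) \<subseteq> cu p \<and>
        (\<forall>i\<in>dom (cf p \<alpha>). the (cf p \<alpha> i) \<in> Apart \<alpha> i) \<and>
        bi_lipschitz (1 + real_of_rat (ceps p \<alpha>)) (dd \<alpha>)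
           (\<lambda>x y. real_of_rat (cd p x y)) (cf p \<alpha>))"

text \<open>cond_le p q: q extends p (written p <= q in the paper).\<close>
definition cond_le :: "('k, 'w) cond \<Rightarrow> ('k, 'w) cond \<Rightarrow> bool" where
  "cond_le p q \<longleftrightarrow>
     cw p \<subseteq> cw q \<and> cu p \<subseteq> cu q \<and>
     (\<forall>x\<in>cu p. \<forall>y\<in>cu p. cd q x y = cd p x y) \<and>
     (\<forall>\<alpha>\<in>cw p. ceps q \<alpha> = ceps p \<alpha> \<and> cf p \<alpha> \<subseteq>\<^sub>m cf q \<alpha>)"

definition cond_compatible ::
  "('k \<Rightarrow> 'w \<Rightarrow> 'w set) \<Rightarrow> ('k \<Rightarrow> 'w \<Rightarrow> 'w \<Rightarrow> real) \<Rightarrow> ('k, 'w) cond \<Rightarrow> ('k, 'w) cond \<Rightarrow> bool" where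
  "cond_compatible Apart dd p q \<longleftrightarrow> (\<exists>r. is_cond Apart dd r \<and> cond_le p r \<and> cond_le q r)"

definition cond_antichain ::
  "('k \<Rightarrow> 'w \<Rightarrow> 'w set) \<Rightarrow> ('k \<Rightarrow> 'w \<Rightarrow> 'w \<Rightarrow> real) \<Rightarrow> ('k, 'w) cond set \<Rightarrow> bool" where
  "cond_antichain Apart dd S \<longleftrightarrow>
     (\<forall>p\<in>S. is_cond Apart dd p) \<and>
     (\<forall>p\<in>S. \<forall>q\<in>S. p \<noteq> q \<longrightarrow> \<not> cond_compatible Apart dd p q)"

end

theory Submission
  imports Defs
begin



lemma pigeon:
  assumes "uncountable T" "\<And>p. p \<in> T \<Longrightarrow> h p \<in> C" "countable C"
  shows "\<exists>c. uncountable {p\<in>T. h p = c}"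
proof (rule ccontr)
  assume "\<nexists>c. uncountable {p \<in> T. h p = c}"
  hence "countable (\<Union>c\<in>C. {p\<in>T. h p = c})" using assms(3) by blast
  moreover have "T \<subseteq> (\<Union>c\<in>C. {p\<in>T. h p = c})" using assms(2) by blast
  ultimately show False using assms(1) countable_subset by blast
qed

lemma delta_aux:
  "\<And>T g. uncountable T \<Longrightarrow> (\<forall>p\<in>T. finite (g p) \<and> card (g p) \<le> n) \<Longrightarrow>
    \<exists>T'\<subseteq>T. uncountable T' \<and> (\<exists>Rt. \<forall>p\<in>T'. \<forall>q\<in>T'. p \<noteq> q \<longrightarrow> g p \<inter> g q = Rt)"
proof (induction n)
  case 0
  hence "\<forall>p\<in>T. g p = {}" by auto
  then show ?case using 0 by blast
next
  case (Suc n)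
  show ?case
  proof (cases "\<exists>x. uncountable {p\<in>T. x \<in> g p}")
    case True
    then obtain x where x: "uncountable {p\<in>T. x \<in> g p}" by (elim exE)
    have "\<forall>p\<in>{p\<in>T. x \<in> g p}. finite (g p - {x}) \<and> card (g p - {x}) \<le> n"
      using Suc.prems(2) by (auto simp: card_Diff_singleton)
    from Suc.IH[OF x this] show ?thesis
    proof (elim exE conjE)
      fix T' Rt assume T': "T' \<subseteq> {p\<in>T. x \<in> g p}" "uncountable T'"
        "\<forall>p\<in>T'. \<forall>q\<in>T'. p \<noteq> q \<longrightarrow> (g p - {x}) \<inter> (g q - {x}) = Rt"
      have "\<forall>p\<in>T'. \<forall>q\<in>T'. p \<noteq> q \<longrightarrow> g p \<inter> g q = insert x Rt"
      proof (intro ballI impI)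
        fix p q assume "p \<in> T'" "q \<in> T'" "p \<noteq> q"
        hence "(g p - {x}) \<inter> (g q - {x}) = Rt" "x \<in> g p" "x \<in> g q" using T' by auto
        thus "g p \<inter> g q = insert x Rt" by blast
      qed
      moreover have "T' \<subseteq> T" using T'(1) by auto
      ultimately show ?thesis using T'(2) by blast
    qed
  next
    case False
    hence ctb: "\<And>x. countable {p\<in>T. x \<in> g p}" by blast
    define Fam where "Fam = {T'. T' \<subseteq> T \<and> (\<forall>p\<in>T'. \<forall>q\<in>T'. p \<noteq> q \<longrightarrow> g p \<inter> g q = {})}"
    have "\<forall>C\<in>chains Fam. \<Union>C \<in> Fam"
    proof
      fix C assume C: "C \<in> chains Fam"
      hence sub: "C \<subseteq> Fam" and ch: "\<And>X Y. X \<in> C \<Longrightarrow> Y \<in> C \<Longrightarrow> X \<subseteq> Y \<or> Y \<subseteq> X"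
        unfolding chains_def chain_subset_def by blast+
      show "\<Union>C \<in> Fam" unfolding Fam_def
      proof (intro CollectI conjI ballI impI)
        show "\<Union>C \<subseteq> T" using sub Fam_def by blast
        fix p q assume "p \<in> \<Union>C" "q \<in> \<Union>C" "p \<noteq> q"
        then obtain X Y where "X \<in> C" "Y \<in> C" "p \<in> X" "q \<in> Y" by blast
        from ch[of X Y] \<open>X \<in> C\<close> \<open>Y \<in> C\<close> have "X \<subseteq> Y \<or> Y \<subseteq> X" .
        then obtain Z where "Z \<in> C" "p \<in> Z" "q \<in> Z" using \<open>X \<in> C\<close> \<open>Y \<in> C\<close> \<open>p \<in> X\<close> \<open>q \<in> Y\<close> by blast
        hence "Z \<in> Fam" using sub by blast
        thus "g p \<inter> g q = {}" unfolding Fam_def using \<open>p \<noteq> q\<close> \<open>p \<in> Z\<close> \<open>q \<in> Z\<close> by blast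
      qed
    qed
    from Zorn_Lemma[OF this] obtain M where M: "M \<in> Fam" "\<And>X. X \<in> Fam \<Longrightarrow> M \<subseteq> X \<Longrightarrow> X = M"
      by blast
    have "uncountable M"
    proof
      assume cM: "countable M"
      have "countable (\<Union>(g ` M))" using cM Suc.prems(2) M(1) unfolding Fam_def
        by (intro countable_UN) (auto intro: countable_finite)
      hence "countable (\<Union>x\<in>\<Union>(g ` M). {p\<in>T. x \<in> g p})" using ctb by blast
      hence "countable ((\<Union>x\<in>\<Union>(g ` M). {p\<in>T. x \<in> g p}) \<union> M)" using cM by blast
      from uncountable_minus_countable[OF Suc.prems(1) this]
      have "T - ((\<Union>x\<in>\<Union>(g ` M). {p\<in>T. x \<in> g p}) \<union> M) \<noteq> {}"
        by (metis countable_empty)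
      then obtain p where p: "p \<in> T" "p \<notin> M" "\<forall>x\<in>\<Union>(g ` M). x \<notin> g p" by blast
      have "insert p M \<in> Fam" using M(1) p unfolding Fam_def by blast
      from M(2)[OF this] p show False by blast
    qed
    then show ?thesis using M(1) unfolding Fam_def by blast
  qed
qed

lemma delta:
  assumes "uncountable T" "\<And>p. p \<in> T \<Longrightarrow> finite (g p)"
  shows "\<exists>T'\<subseteq>T. uncountable T' \<and> (\<exists>Rt. \<forall>p\<in>T'. \<forall>q\<in>T'. p \<noteq> q \<longrightarrow> g p \<inter> g q = Rt)"
proof -
  obtain k where k: "uncountable {p\<in>T. card (g p) = k}"
  proof -
    have "countable (UNIV :: nat set)" by simp
    from pigeon[OF assms(1), of "\<lambda>p. card (g p)", OF _ this] show ?thesis using that by blast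
  qed
  have "\<forall>p\<in>{p\<in>T. card (g p) = k}. finite (g p) \<and> card (g p) \<le> k" using assms(2) by simp
  from delta_aux[OF k this] show ?thesis
  proof (elim exE conjE)
    fix T' Rt assume a: "T' \<subseteq> {p\<in>T. card (g p) = k}" "uncountable T'"
      "\<forall>p\<in>T'. \<forall>q\<in>T'. p \<noteq> q \<longrightarrow> g p \<inter> g q = Rt"
    have "T' \<subseteq> T" using a(1) by auto
    with a(2,3) show ?thesis by blast
  qed
qed


lemma rat_below:
  fixes f :: "'a \<Rightarrow> real"
  assumes "finite X" "\<And>x. x \<in> X \<Longrightarrow> 0 < f x"
  shows "\<exists>k::rat. 0 < k \<and> (\<forall>x\<in>X. of_rat k < f x)"
  using assms
proof (induction X rule: finite_induct)
  case empty
  show ?case by (rule exI[of _ 1]) simp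
next
  case (insert x F)
  then obtain k where k: "0 < k" "\<forall>y\<in>F. of_rat k < f y" by auto
  obtain r::rat where r: "(0::real) < of_rat r" "of_rat r < f x" using of_rat_dense[of 0 "f x"] insert.prems[of x] by blast
  show ?case
  proof (rule exI[of _ "min k r"], intro conjI ballI)
    have "0 < r" using r(1) by simp
    thus "0 < min k r" using k(1) by simp
    fix y assume "y \<in> insert x F"
    moreover have "of_rat (min k r) \<le> (of_rat k :: real)" "of_rat (min k r) \<le> (of_rat r :: real)"
      by (simp_all add: of_rat_less_eq)
    ultimately show "of_rat (min k r) < f y" using k(2) r(2) by fastforce
  qed
qed


lemma deltaE:
  assumes "uncountable T" "\<And>p. p \<in> T \<Longrightarrow> finite (g p)"
  obtains T' Rt where "T' \<subseteq> T" "uncountable T'" "\<And>p q. p \<in> T' \<Longrightarrow> q \<in> T' \<Longrightarrow> p \<noteq> q \<Longrightarrow> g p \<inter> g q = Rt"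
proof -
  have "\<exists>T'\<subseteq>T. uncountable T' \<and> (\<exists>Rt. \<forall>p\<in>T'. \<forall>q\<in>T'. p \<noteq> q \<longrightarrow> g p \<inter> g q = Rt)"
    by (rule delta[of T g]) (fact assms)+
  then show thesis
  proof (elim exE conjE)
    fix T' Rt assume a: "T' \<subseteq> T" "uncountable T'" "\<forall>p\<in>T'. \<forall>q\<in>T'. p \<noteq> q \<longrightarrow> g p \<inter> g q = Rt"
    show thesis
      apply (rule that[of T' Rt])
      using a by auto
  qed
qed

lemma pigeonE:
  assumes "uncountable T" "\<And>p. p \<in> T \<Longrightarrow> h p \<in> C" "countable C"
  obtains c where "uncountable {p\<in>T. h p = c}"
proof -
  have "\<exists>c. uncountable {p\<in>T. h p = c}"
    by (rule pigeon[of T h C]) (fact assms)+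
  then show thesis
  proof (elim exE)
    fix c assume "uncountable {p\<in>T. h p = c}"
    thus thesis by (rule that)
  qed
qed

lemma uncountable_two:
  assumes "uncountable T"
  obtains p q where "p \<in> T" "q \<in> T" "p \<noteq> q"
proof -
  have "T \<noteq> {}" using assms by (metis countable_empty)
  then obtain p where p: "p \<in> T" by blast 
  have "uncountable (T - {p})" using assms by simp
  hence "T - {p} \<noteq> {}" by (metis countable_empty)
  then obtain q where "q \<in> T - {p}" by blast
  thus thesis using p that by blast
qed

lemma deltaE2:
  assumes "uncountable T" "\<forall>p\<in>T. finite (g p)"
  obtains T' Rt where "T' \<subseteq> T" "uncountable T'" "\<And>p q. p \<in> T' \<Longrightarrow> q \<in> T' \<Longrightarrow> p \<noteq> q \<Longrightarrow> g p \<inter> g q = Rt"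
proof -
  have "\<And>p. p \<in> T \<Longrightarrow> finite (g p)" using assms(2) by blast
  from deltaE[of T g, OF assms(1) this] that show thesis by blast
qed

lemma pigeonE2:
  assumes "uncountable T" "\<forall>p\<in>T. h p \<in> C" "countable C"
  obtains c where "uncountable {p\<in>T. h p = c}"
proof -
  have "\<And>p. p \<in> T \<Longrightarrow> h p \<in> C" using assms(2) by blast
  from pigeonE[of T h C, OF assms(1) this assms(3)] that show thesis by blast
qed



lemma is_condD:
  assumes "is_cond Apart dd p"
  shows "finite (cw p)" "finite (cu p)" "metric_on (cu p) (cd p)"
    "\<And>x y. x \<notin> cu p \<or> y \<notin> cu p \<Longrightarrow> cd p x y = 0"
    "\<And>\<alpha>. \<alpha> \<notin> cw p \<Longrightarrow> cf p \<alpha> = Map.empty"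
    "\<And>\<alpha>. \<alpha> \<notin> cw p \<Longrightarrow> ceps p \<alpha> = 0"
    "\<And>\<alpha>. \<alpha> \<in> cw p \<Longrightarrow> 0 < ceps p \<alpha>"
    "\<And>\<alpha>. \<alpha> \<in> cw p \<Longrightarrow> ceps p \<alpha> < 1"
    "\<And>\<alpha>. \<alpha> \<in> cw p \<Longrightarrow> finite (dom (cf p \<alpha>))"
    "\<And>\<alpha>. \<alpha> \<in> cw p \<Longrightarrow> ran (cf p \<alpha>) \<subseteq> cu p"
    "\<And>\<alpha> i. \<alpha> \<in> cw p \<Longrightarrow> i \<in> dom (cf p \<alpha>) \<Longrightarrow> the (cf p \<alpha> i) \<in> Apart \<alpha> i"
    "\<And>\<alpha>. \<alpha> \<in> cw p \<Longrightarrow> bi_lipschitz (1 + real_of_rat (ceps p \<alpha>)) (dd \<alpha>)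
           (\<lambda>x y. real_of_rat (cd p x y)) (cf p \<alpha>)"
  using assms unfolding is_cond_def by blast+

lemma metric_onD:
  assumes "metric_on S d" "x \<in> S" "y \<in> S"
  shows "0 \<le> d x y" "d x y = 0 \<longleftrightarrow> x = y" "d x y = d y x" "\<And>z. z \<in> S \<Longrightarrow> d x y \<le> d x z + d z y"
  using assms unfolding metric_on_def by blast+

lemma bi_lipschitzD:
  assumes "bi_lipschitz lam d1 d2 f" "a \<in> dom f" "b \<in> dom f" "a \<noteq> b"
  shows "d2 (the (f a)) (the (f b)) < lam * d1 a b" "d1 a b < lam * d2 (the (f a)) (the (f b))"
  using assms unfolding bi_lipschitz_def by blast+

lemma bi_lipschitz_inj:
  assumes "bi_lipschitz lam d1 d2 f" "a \<in> dom f" "b \<in> dom f" "the (f a) = the (f b)"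
  shows "a = b"
  using assms unfolding bi_lipschitz_def inj_on_def by blast

lemma bi_lipschitz_cong:
  assumes "\<And>x y. x \<in> ran f \<Longrightarrow> y \<in> ran f \<Longrightarrow> d2 x y = d2' x y"
  shows "bi_lipschitz lam d1 d2 f = bi_lipschitz lam d1 d2' f"
proof -
  have "\<And>a. a \<in> dom f \<Longrightarrow> the (f a) \<in> ran f" by (auto simp: ran_def)
  thus ?thesis unfolding bi_lipschitz_def using assms by (metis (no_types, lifting))
qed

lemma bi_lipschitzI:
  assumes "\<And>a b. a \<in> dom f \<Longrightarrow> b \<in> dom f \<Longrightarrow> a \<noteq> b \<Longrightarrow>
      d2 (the (f a)) (the (f b)) < lam * d1 a b \<and> d1 a b < lam * d2 (the (f a)) (the (f b))"
    and "\<And>a b. a \<in> dom f \<Longrightarrow> b \<in> dom f \<Longrightarrow> a \<noteq> b \<Longrightarrow> the (f a) \<noteq> the (f b)"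
  shows "bi_lipschitz lam d1 d2 f"
  unfolding bi_lipschitz_def inj_on_def using assms by blast

lemma bi_lipschitzI2:
  assumes "\<And>a b. a \<in> dom f \<Longrightarrow> b \<in> dom f \<Longrightarrow> a \<noteq> b \<Longrightarrow>
      d2 (the (f a)) (the (f b)) < lam * d1 a b \<and> d1 a b < lam * d2 (the (f a)) (the (f b))"
    and "\<And>a b. a \<noteq> b \<Longrightarrow> 0 < d1 a b" and "\<And>x. d2 x x = 0"
  shows "bi_lipschitz lam d1 d2 f"
proof (rule bi_lipschitzI)
  fix a b assume ab: "a \<in> dom f" "b \<in> dom f" "a \<noteq> b"
  show "d2 (the (f a)) (the (f b)) < lam * d1 a b \<and> d1 a b < lam * d2 (the (f a)) (the (f b))"
    using assms(1)[OF ab] .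
  show "the (f a) \<noteq> the (f b)"
  proof
    assume "the (f a) = the (f b)"
    hence "d1 a b < 0" using assms(1)[OF ab] assms(3) by simp
    thus False using assms(2)[OF ab(3)] by simp
  qed
qed

lemma cond_ran_in:
  assumes "is_cond Apart dd p" "\<alpha> \<in> cw p" "a \<in> dom (cf p \<alpha>)"
  shows "the (cf p \<alpha> a) \<in> cu p"
proof -
  have "ran (cf p \<alpha>) \<subseteq> cu p" by (rule is_condD(10)[OF assms(1,2)])
  moreover have "the (cf p \<alpha> a) \<in> ran (cf p \<alpha>)" using assms(3) by (auto simp: ran_def)
  ultimately show ?thesis by blast
qed



lemma kappa_exists:
  assumes cp: "is_cond Apart dd p"
  shows "\<exists>k::rat. 0 < k \<and> (\<forall>s\<in>cu p. \<forall>t\<in>cu p. s \<noteq> t \<longrightarrow> k \<le> cd p s t) \<and>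
    (\<forall>\<alpha>\<in>cw p. \<forall>a\<in>dom (cf p \<alpha>). \<forall>a'\<in>dom (cf p \<alpha>). a \<noteq> a' \<longrightarrow>
       of_rat k < (1 + of_rat (ceps p \<alpha>)) * dd \<alpha> a a' - of_rat (cd p (the (cf p \<alpha> a)) (the (cf p \<alpha> a'))) \<and>
       of_rat k < (1 + of_rat (ceps p \<alpha>)) * of_rat (cd p (the (cf p \<alpha> a)) (the (cf p \<alpha> a'))) - dd \<alpha> a a')"
proof -
  define X1 where "X1 = {(s,t). s \<in> cu p \<and> t \<in> cu p \<and> s \<noteq> t}"
  define X2 where "X2 = {(\<alpha>,a,a'). \<alpha> \<in> cw p \<and> a \<in> dom (cf p \<alpha>) \<and> a' \<in> dom (cf p \<alpha>) \<and> a \<noteq> a'}"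
  define f1 where "f1 = (\<lambda>(s,t). real_of_rat (cd p s t))"
  define f2 where "f2 = (\<lambda>(\<alpha>,a,a'). (1 + of_rat (ceps p \<alpha>)) * dd \<alpha> a a' - of_rat (cd p (the (cf p \<alpha> a)) (the (cf p \<alpha> a'))))"
  define f3 where "f3 = (\<lambda>(\<alpha>,a,a'). (1 + of_rat (ceps p \<alpha>)) * of_rat (cd p (the (cf p \<alpha> a)) (the (cf p \<alpha> a'))) - dd \<alpha> a a')"
  have fX1: "finite X1"
  proof (rule finite_subset)
    show "X1 \<subseteq> cu p \<times> cu p" unfolding X1_def by auto
    show "finite (cu p \<times> cu p)" using is_condD(2)[OF cp] by simp
  qed
  have fX2: "finite X2"
  proof (rule finite_subset)
    show "X2 \<subseteq> Sigma (cw p) (\<lambda>\<alpha>. dom (cf p \<alpha>) \<times> dom (cf p \<alpha>))" unfolding X2_def by auto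
    show "finite (Sigma (cw p) (\<lambda>\<alpha>. dom (cf p \<alpha>) \<times> dom (cf p \<alpha>)))"
      using is_condD(1,9)[OF cp] by (intro finite_SigmaI) auto
  qed
  have p1: "0 < f1 x" if xx: "x \<in> X1" for x
  proof -
    obtain s t where x: "x = (s,t)" "s \<in> cu p" "t \<in> cu p" "s \<noteq> t" using xx unfolding X1_def by auto
    have "0 \<le> cd p s t" "cd p s t \<noteq> 0" using metric_onD(1,2)[OF is_condD(3)[OF cp] x(2,3)] x(4) by auto
    thus ?thesis unfolding f1_def x by simp
  qed
  have p23: "0 < f2 x \<and> 0 < f3 x" if xx: "x \<in> X2" for x
  proof -
    obtain \<alpha> a a' where x: "x = (\<alpha>,a,a')" "\<alpha> \<in> cw p" "a \<in> dom (cf p \<alpha>)" "a' \<in> dom (cf p \<alpha>)" "a \<noteq> a'"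
      using xx unfolding X2_def by auto
    from bi_lipschitzD[OF is_condD(12)[OF cp x(2)] x(3,4,5)] show ?thesis
      unfolding f2_def f3_def x by simp
  qed
  obtain k1 where k1: "0 < k1" "\<forall>x\<in>X1. of_rat k1 < f1 x" using rat_below[of X1 f1, OF fX1] p1 by blast
  obtain k2 where k2: "0 < k2" "\<forall>x\<in>X2. of_rat k2 < f2 x" using rat_below[OF fX2, of f2] p23 by blast
  obtain k3 where k3: "0 < k3" "\<forall>x\<in>X2. of_rat k3 < f3 x" using rat_below[OF fX2, of f3] p23 by blast
  define k where "k = min k1 (min k2 k3)"
  have kk: "real_of_rat k \<le> of_rat k1" "real_of_rat k \<le> of_rat k2" "real_of_rat k \<le> of_rat k3"
    unfolding k_def by (simp_all add: of_rat_less_eq)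
  show ?thesis
  proof (intro exI[of _ k] conjI ballI impI)
    show "0 < k" using k1 k2 k3 unfolding k_def by simp
    fix s t assume "s \<in> cu p" "t \<in> cu p" "s \<noteq> t"
    hence "(s,t) \<in> X1" unfolding X1_def by simp
    hence "real_of_rat k < of_rat (cd p s t)" using k1(2) kk unfolding f1_def by fastforce
    thus "k \<le> cd p s t" by (simp add: of_rat_less)
  next
    fix \<alpha> a a' assume "\<alpha> \<in> cw p" "a \<in> dom (cf p \<alpha>)" "a' \<in> dom (cf p \<alpha>)" "a \<noteq> a'"
    hence x: "(\<alpha>,a,a') \<in> X2" unfolding X2_def by simp
    show "of_rat k < (1 + of_rat (ceps p \<alpha>)) * dd \<alpha> a a' - of_rat (cd p (the (cf p \<alpha> a)) (the (cf p \<alpha> a')))"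
      using k2(2) x kk unfolding f2_def by fastforce
    show "of_rat k < (1 + of_rat (ceps p \<alpha>)) * of_rat (cd p (the (cf p \<alpha> a)) (the (cf p \<alpha> a'))) - dd \<alpha> a a'"
      using k3(2) x kk unfolding f3_def by fastforce
  qed
qed

lemma list_sigma:
  assumes "distinct xs" "distinct ys" "length xs = length ys"
  obtains \<sigma> where "bij_betw \<sigma> (set xs) (set ys)" "\<And>i. i < length xs \<Longrightarrow> \<sigma> (xs ! i) = ys ! i"
proof -
  have b1: "bij_betw ((!) xs) {..<length xs} (set xs)" by (rule bij_betw_nth[OF assms(1)]) auto
  have b2: "bij_betw ((!) ys) {..<length xs} (set ys)" by (rule bij_betw_nth[OF assms(2)]) (use assms(3) in auto)
  define \<sigma> where "\<sigma> = (\<lambda>z. ys ! (inv_into {..<length xs} ((!) xs) z))"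
  have "bij_betw \<sigma> (set xs) (set ys)"
    unfolding \<sigma>_def using bij_betw_trans[OF bij_betw_inv_into[OF b1] b2] by (simp add: comp_def)
  moreover have "\<sigma> (xs ! i) = ys ! i" if "i < length xs" for i
    unfolding \<sigma>_def using bij_betw_inv_into_left[OF b1] that by simp
  ultimately show thesis using that by blast
qed



lemma amalg:
  fixes p q :: "('k,'w) cond" and \<sigma> :: "'w \<Rightarrow> 'w" and \<kappa> :: rat
    and Apart :: "'k \<Rightarrow> 'w \<Rightarrow> 'w set" and dd :: "'k \<Rightarrow> 'w \<Rightarrow> 'w \<Rightarrow> real"
  assumes cp: "is_cond Apart dd p" and cq: "is_cond Apart dd q"
  and Rdef: "cw p \<inter> cw q = R"
  and Udef: "cu p \<inter> cu q = U"
  and sig_bij: "bij_betw \<sigma> (cu p) (cu q)"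
  and sig_U: "\<And>x. x \<in> U \<Longrightarrow> \<sigma> x = x"
  and sig_iso: "\<And>x y. x \<in> cu p \<Longrightarrow> y \<in> cu p \<Longrightarrow> cd q (\<sigma> x) (\<sigma> y) = cd p x y"
  and eps_eq: "\<And>\<alpha>. \<alpha> \<in> R \<Longrightarrow> ceps q \<alpha> = ceps p \<alpha>"
  and val_eq: "\<And>\<alpha> a. \<alpha> \<in> R \<Longrightarrow> a \<in> dom (cf p \<alpha>) \<Longrightarrow> a \<in> dom (cf q \<alpha>) \<Longrightarrow> cf p \<alpha> a = cf q \<alpha> a"
  and ran_eq: "\<And>\<alpha> x. \<alpha> \<in> R \<Longrightarrow> x \<in> cu p \<Longrightarrow> (x \<in> ran (cf p \<alpha>)) = (\<sigma> x \<in> ran (cf q \<alpha>))"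
  and kpos: "0 < \<kappa>"
  and kmin: "\<And>s t. s \<in> cu p \<Longrightarrow> t \<in> cu p \<Longrightarrow> s \<noteq> t \<Longrightarrow> \<kappa> \<le> cd p s t"
  and slack: "\<And>\<alpha> a a'. \<alpha> \<in> R \<Longrightarrow> a \<in> dom (cf p \<alpha>) \<Longrightarrow> a' \<in> dom (cf p \<alpha>) \<Longrightarrow> a \<noteq> a' \<Longrightarrow>
       of_rat \<kappa> < (1 + of_rat (ceps p \<alpha>)) * dd \<alpha> a a' - of_rat (cd p (the (cf p \<alpha> a)) (the (cf p \<alpha> a'))) \<and>
       of_rat \<kappa> < (1 + of_rat (ceps p \<alpha>)) * of_rat (cd p (the (cf p \<alpha> a)) (the (cf p \<alpha> a'))) - dd \<alpha> a a'"
  and close: "\<And>\<alpha> a b. \<alpha> \<in> R \<Longrightarrow> a \<in> dom (cf p \<alpha>) \<Longrightarrow> cf q \<alpha> b = Some (\<sigma> (the (cf p \<alpha> a))) \<Longrightarrow>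
       dd \<alpha> a b < of_rat \<kappa> / 2"
  and uniq: "\<And>x \<alpha> \<beta>. x \<in> cu p - U \<Longrightarrow> \<alpha> \<in> R \<Longrightarrow> \<beta> \<in> R \<Longrightarrow> x \<in> ran (cf p \<alpha>) \<Longrightarrow> x \<in> ran (cf p \<beta>) \<Longrightarrow> \<alpha> = \<beta>"
  and A_disj: "\<And>\<alpha> i j. i \<noteq> j \<Longrightarrow> Apart \<alpha> i \<inter> Apart \<alpha> j = {}"
  and d_metric: "\<And>\<alpha>. metric_on UNIV (dd \<alpha>)"
  shows "cond_compatible Apart dd p q"
proof -
  define pinv where "pinv = inv_into (cu p) \<sigma>"
  define \<pi> where "\<pi> z = (if z \<in> cu p then z else pinv z)" for z
  define eps where "eps \<alpha> = real_of_rat (ceps p \<alpha>)" for \<alpha>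
  have F1: "pinv z \<in> cu p" "\<sigma> (pinv z) = z" if "z \<in> cu q" for z
    using that sig_bij unfolding pinv_def
    by (metis bij_betw_def inv_into_into, metis bij_betw_inv_into_right)
  have F2: "pinv (\<sigma> x) = x" if "x \<in> cu p" for x
    using that sig_bij unfolding pinv_def by (metis bij_betw_inv_into_left)
  have sig_in: "\<sigma> x \<in> cu q" if "x \<in> cu p" for x
    using that sig_bij by (metis bij_betwE)
  have sig_inj: "x = y" if "x \<in> cu p" "y \<in> cu p" "\<sigma> x = \<sigma> y" for x y
    using that sig_bij by (metis bij_betw_def inj_onD)
  have Up: "U \<subseteq> cu p" and Uq: "U \<subseteq> cu q" using Udef by auto
  have Rp: "R \<subseteq> cw p" and Rq: "R \<subseteq> cw q" using Rdef by auto
  have F3: "\<pi> z \<in> cu p" if "z \<in> cu p \<union> cu q" for z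
    using that F1 unfolding \<pi>_def by auto
  have piq: "\<pi> z = pinv z" if "z \<in> cu q" for z
  proof (cases "z \<in> cu p")
    case True
    hence "z \<in> U" using that Udef by auto
    hence "\<sigma> z = z" using sig_U by auto
    hence "pinv z = z" using F2[OF True] by simp
    thus ?thesis using True unfolding \<pi>_def by simp
  qed (simp add: \<pi>_def)
  have sig_pi: "\<sigma> (\<pi> z) = z" if "z \<in> cu q" for z using piq[OF that] F1[OF that] by simp
  have pi_p: "\<pi> z = z" if "z \<in> cu p" for z using that unfolding \<pi>_def by simp
  have pi_sig: "\<pi> (\<sigma> x) = x" if "x \<in> cu p" for x using piq[OF sig_in[OF that]] F2[OF that] by simp
  have F5: "z = \<pi> z \<or> z = \<sigma> (\<pi> z)" if "z \<in> cu p \<union> cu q" for z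
    using that pi_p sig_pi by auto
  have sigU: "x \<in> U" if "x \<in> cu p" "\<sigma> x = x" for x
    using that sig_in Udef by force
  have F6: "\<pi> x \<in> cu p - U" if "x \<in> cu p \<union> cu q" "y \<in> cu p \<union> cu q" "x \<noteq> y" "\<pi> x = \<pi> y" for x y
  proof -
    have "\<pi> x \<in> cu p" using F3 that by auto
    moreover have "\<pi> x \<notin> U"
    proof
      assume "\<pi> x \<in> U"
      hence "\<sigma> (\<pi> x) = \<pi> x" using sig_U by auto
      hence "x = \<pi> x" "y = \<pi> y" using F5 that by metis+
      thus False using that by simp
    qed
    ultimately show ?thesis by simp
  qed
  define good where "good x c \<longleftrightarrow> 0 < c \<and> c \<le> \<kappa> \<and> (\<forall>\<alpha>\<in>R. \<forall>a b. cf p \<alpha> a = Some x \<longrightarrow> cf q \<alpha> b = Some (\<sigma> x) \<longrightarrow>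
      dd \<alpha> a b < (1 + eps \<alpha>) * of_rat c \<and> of_rat c < (1 + eps \<alpha>) * dd \<alpha> a b)" for x c
  define c where "c x = (SOME c. good x c)" for x
  have mp: "metric_on (cu p) (cd p)" and mq: "metric_on (cu q) (cd q)"
    using is_condD(3)[OF cp] is_condD(3)[OF cq] .
  have ddm: "0 \<le> dd \<alpha> a b" "dd \<alpha> a b = 0 \<longleftrightarrow> a = b" "dd \<alpha> a b = dd \<alpha> b a"
     "dd \<alpha> a b \<le> dd \<alpha> a z + dd \<alpha> z b" for \<alpha> a b z
    using metric_onD[OF d_metric[of \<alpha>], of a b] by auto
  have epsb: "0 < eps \<alpha>" "eps \<alpha> < 1" if "\<alpha> \<in> R" for \<alpha>
    using is_condD(7,8)[OF cp, of \<alpha>] that Rp unfolding eps_def by auto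
  have blp: "bi_lipschitz (1 + eps \<alpha>) (dd \<alpha>) (\<lambda>x y. real_of_rat (cd p x y)) (cf p \<alpha>)" if "\<alpha> \<in> cw p" for \<alpha>
    using is_condD(12)[OF cp that] unfolding eps_def .
  have blq: "bi_lipschitz (1 + real_of_rat (ceps q \<alpha>)) (dd \<alpha>) (\<lambda>x y. real_of_rat (cd q x y)) (cf q \<alpha>)" if "\<alpha> \<in> cw q" for \<alpha>
    using is_condD(12)[OF cq that] .
  have C1: "good x (c x)" if x: "x \<in> cu p - U" for x
  proof (cases "\<exists>\<alpha>\<in>R. \<exists>a b. cf p \<alpha> a = Some x \<and> cf q \<alpha> b = Some (\<sigma> x)")
    case False
    hence "good x \<kappa>" unfolding good_def using kpos by blast
    thus ?thesis unfolding c_def by (rule someI)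
  next
    case True
    then obtain \<alpha> a b where ab: "\<alpha> \<in> R" "cf p \<alpha> a = Some x" "cf q \<alpha> b = Some (\<sigma> x)" by blast
    have "a \<noteq> b"
    proof
      assume "a = b"
      have "a \<in> dom (cf p \<alpha>)" "a \<in> dom (cf q \<alpha>)" using ab \<open>a = b\<close> by auto
      hence "cf p \<alpha> a = cf q \<alpha> a" using val_eq[OF ab(1)] by blast
      hence "\<sigma> x = x" using ab \<open>a = b\<close> by simp
      thus False using sigU x by auto
    qed
    define t where "t = dd \<alpha> a b"
    have tpos: "0 < t" using ddm[of \<alpha> a b] \<open>a \<noteq> b\<close> unfolding t_def by linarith
    have tk: "t < of_rat \<kappa> / 2" using close[of \<alpha> a b] ab unfolding t_def by (simp add: domI)
    have e: "0 < eps \<alpha>" "eps \<alpha> < 1" using epsb ab(1) by auto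
    have "t < (1 + eps \<alpha>) * t" using tpos e by simp
    then obtain c0 :: rat where c0: "t < of_rat c0" "of_rat c0 < (1 + eps \<alpha>) * t" using of_rat_dense by blast
    have "(1 + eps \<alpha>) * t \<le> 2 * t" using e tpos by (intro mult_right_mono) auto
    hence "real_of_rat c0 \<le> of_rat \<kappa>" using c0 tk by linarith
    hence ck: "c0 \<le> \<kappa>" by (simp add: of_rat_less_eq)
    have "0 < real_of_rat c0" using c0 tpos by linarith
    hence cpos: "0 < c0" by (simp add: zero_less_of_rat_iff)
    have "\<forall>\<beta>\<in>R. \<forall>a' b'. cf p \<beta> a' = Some x \<longrightarrow> cf q \<beta> b' = Some (\<sigma> x) \<longrightarrow>
      dd \<beta> a' b' < (1 + eps \<beta>) * of_rat c0 \<and> of_rat c0 < (1 + eps \<beta>) * dd \<beta> a' b'"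
    proof (intro ballI allI impI)
      fix \<beta> a' b' assume \<beta>: "\<beta> \<in> R" and a': "cf p \<beta> a' = Some x" and b': "cf q \<beta> b' = Some (\<sigma> x)"
      have "x \<in> ran (cf p \<beta>)" "x \<in> ran (cf p \<alpha>)" using a' ab by (auto simp: ran_def)
      hence "\<beta> = \<alpha>" using uniq[OF x \<beta> ab(1)] by blast
      have "a' = a" using bi_lipschitz_inj[OF blp[of \<alpha>], of a' a] a' ab Rp \<open>\<beta> = \<alpha>\<close> by (auto simp: domI)
      have "b' = b" using bi_lipschitz_inj[OF blq[of \<alpha>], of b' b] b' ab Rq \<open>\<beta> = \<alpha>\<close> by (auto simp: domI)
      have "t < (1 + eps \<alpha>) * of_rat c0" using c0 e tpos by (smt (verit) mult_le_cancel_right1 mult_pos_pos)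
      thus "dd \<beta> a' b' < (1 + eps \<beta>) * of_rat c0 \<and> of_rat c0 < (1 + eps \<beta>) * dd \<beta> a' b'"
        using c0 \<open>\<beta> = \<alpha>\<close> \<open>a' = a\<close> \<open>b' = b\<close> unfolding t_def by simp
    qed
    hence "good x c0" unfolding good_def using cpos ck by blast
    thus ?thesis unfolding c_def by (rule someI)
  qed
  define D where "D x y = (if x \<noteq> y \<and> \<pi> x = \<pi> y then c (\<pi> x) else cd p (\<pi> x) (\<pi> y))" for x y
  define r :: "('k,'w) cond" where "r = \<lparr> cw = cw p \<union> cw q, cu = cu p \<union> cu q,
     cd = (\<lambda>x y. if x \<in> cu p \<union> cu q \<and> y \<in> cu p \<union> cu q then D x y else 0),
     cf = (\<lambda>\<alpha>. cf p \<alpha> ++ cf q \<alpha>),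
     ceps = (\<lambda>\<alpha>. if \<alpha> \<in> cw p then ceps p \<alpha> else ceps q \<alpha>) \<rparr>"
  have r_simps: "cw r = cw p \<union> cw q" "cu r = cu p \<union> cu q"
    "cd r x y = (if x \<in> cu p \<union> cu q \<and> y \<in> cu p \<union> cu q then D x y else 0)"
    "cf r \<alpha> = cf p \<alpha> ++ cf q \<alpha>" "ceps r \<alpha> = (if \<alpha> \<in> cw p then ceps p \<alpha> else ceps q \<alpha>)" for x y \<alpha>
    unfolding r_def by simp_all
  have K1: "D x y = cd p x y" if "x \<in> cu p" "y \<in> cu p" for x y
    using that pi_p unfolding D_def by auto
  have K2: "D x y = cd q x y" if xy: "x \<in> cu q" "y \<in> cu q" for x y
  proof (cases "x = y")
    case True
    have "cd p (\<pi> x) (\<pi> x) = 0" "cd q x x = 0" using metric_onD(2)[OF mp F3 F3, of x x] metric_onD(2)[OF mq xy(1) xy(1)] xy by auto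
    thus ?thesis using True unfolding D_def by simp
  next
    case False
    hence "\<pi> x \<noteq> \<pi> y" using sig_pi xy by metis
    hence "D x y = cd p (\<pi> x) (\<pi> y)" unfolding D_def by simp
    also have "\<dots> = cd q (\<sigma> (\<pi> x)) (\<sigma> (\<pi> y))" using sig_iso F3 xy by auto
    finally show ?thesis using sig_pi xy by simp
  qed
  define Ur where "Ur = cu p \<union> cu q"
  have pmet: "0 \<le> cd p x y" "cd p x y = 0 \<longleftrightarrow> x = y" "cd p x y = cd p y x"
     "cd p x y \<le> cd p x z + cd p z y" if "x \<in> cu p" "y \<in> cu p" "z \<in> cu p" for x y z
    using metric_onD[OF mp that(1,2)] that(3) by auto
  have twin: "0 < c (\<pi> x) \<and> c (\<pi> x) \<le> \<kappa>" if "x \<in> Ur" "y \<in> Ur" "x \<noteq> y" "\<pi> x = \<pi> y" for x y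
    using C1[OF F6[OF that[unfolded Ur_def]]] unfolding good_def by blast
  have Dge: "cd p (\<pi> x) (\<pi> y) \<le> D x y" if "x \<in> Ur" "y \<in> Ur" for x y
  proof (cases "x \<noteq> y \<and> \<pi> x = \<pi> y")
    case True
    have "cd p (\<pi> x) (\<pi> y) = 0" using pmet(2)[of "\<pi> x" "\<pi> y" "\<pi> x"] F3 that True unfolding Ur_def by auto
    thus ?thesis using twin[OF that] True unfolding D_def by simp
  next
    case False
    thus ?thesis unfolding D_def by (simp only: if_False)
  qed
  have Dnn: "0 \<le> D x y" if "x \<in> Ur" "y \<in> Ur" for x y
    using Dge[OF that] pmet(1)[of "\<pi> x" "\<pi> y" "\<pi> x"] F3 that unfolding Ur_def by force
  have Dzero: "D x y = 0 \<longleftrightarrow> x = y" if "x \<in> Ur" "y \<in> Ur" for x y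
  proof (cases "x = y")
    case True
    thus ?thesis using pmet(2)[of "\<pi> x" "\<pi> x" "\<pi> x"] F3 that unfolding Ur_def D_def by auto
  next
    case False
    show ?thesis
    proof (cases "\<pi> x = \<pi> y")
      case True
      thus ?thesis using twin[OF that False True] False unfolding D_def by auto
    next
      case f2: False
      thus ?thesis using pmet(2)[of "\<pi> x" "\<pi> y" "\<pi> x"] F3 that False unfolding Ur_def D_def by auto
    qed
  qed
  have Dsym: "D x y = D y x" if "x \<in> Ur" "y \<in> Ur" for x y
    using pmet(3)[of "\<pi> x" "\<pi> y" "\<pi> x"] F3 that unfolding Ur_def D_def by auto
  have Dtri: "D x z \<le> D x y + D y z" if xyz: "x \<in> Ur" "y \<in> Ur" "z \<in> Ur" for x y z
  proof (cases "x \<noteq> z \<and> \<pi> x = \<pi> z")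
    case True
    show ?thesis
    proof (cases "y = x \<or> y = z")
      case True
      thus ?thesis using Dzero xyz Dnn by auto
    next
      case False
      have "\<pi> y \<noteq> \<pi> x"
      proof
        assume e: "\<pi> y = \<pi> x"
        have "x = \<pi> x \<or> x = \<sigma> (\<pi> x)" "z = \<pi> x \<or> z = \<sigma> (\<pi> x)" "y = \<pi> x \<or> y = \<sigma> (\<pi> x)"
          using F5 xyz True e unfolding Ur_def by metis+
        thus False using True False by auto
      qed
      hence "D x y = cd p (\<pi> x) (\<pi> y)" unfolding D_def by auto
      also have "\<dots> \<ge> \<kappa>" using kmin F3 xyz \<open>\<pi> y \<noteq> \<pi> x\<close> unfolding Ur_def by auto
      finally have "\<kappa> \<le> D x y" .
      moreover have "D x z \<le> \<kappa>" using twin[OF xyz(1,3)] True unfolding D_def by simp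
      ultimately show ?thesis using Dnn[OF xyz(2,3)] by linarith
    qed
  next
    case False
    hence "D x z = cd p (\<pi> x) (\<pi> z)" unfolding D_def by auto
    also have "\<dots> \<le> cd p (\<pi> x) (\<pi> y) + cd p (\<pi> y) (\<pi> z)" using pmet(4) F3 xyz unfolding Ur_def by auto
    also have "\<dots> \<le> D x y + D y z" using Dge xyz by (intro add_mono) auto
    finally show ?thesis .
  qed
  have r_metric: "metric_on (cu r) (cd r)"
    unfolding metric_on_def r_simps Ur_def[symmetric] using Dnn Dzero Dsym Dtri by auto
  have K3: "of_rat (D (the (cf p \<alpha> a)) (the (cf q \<alpha> b))) < (1 + eps \<alpha>) * dd \<alpha> a b \<and>
            dd \<alpha> a b < (1 + eps \<alpha>) * of_rat (D (the (cf p \<alpha> a)) (the (cf q \<alpha> b)))"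
    if \<alpha>: "\<alpha> \<in> R" and a: "a \<in> dom (cf p \<alpha>)" and b: "b \<in> dom (cf q \<alpha>)" and ab: "a \<noteq> b" for \<alpha> a b
  proof -
    define x where "x = the (cf p \<alpha> a)"
    define y where "y = the (cf q \<alpha> b)"
    have ax: "cf p \<alpha> a = Some x" using a unfolding x_def by auto
    have by': "cf q \<alpha> b = Some y" using b unfolding y_def by auto
    have xp: "x \<in> cu p" using is_condD(10)[OF cp, of \<alpha>] Rp \<alpha> ax by (auto simp: ran_def)
    have yq: "y \<in> cu q" using is_condD(10)[OF cq, of \<alpha>] Rq \<alpha> by' by (auto simp: ran_def)
    define y' where "y' = \<pi> y"
    have y'p: "y' \<in> cu p" and sy': "\<sigma> y' = y" using F3 sig_pi yq unfolding y'_def by auto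
    have "y \<in> ran (cf q \<alpha>)" using by' by (auto simp: ran_def)
    hence "y' \<in> ran (cf p \<alpha>)" using ran_eq[OF \<alpha> y'p] sy' by simp
    then obtain a' where a': "cf p \<alpha> a' = Some y'" by (auto simp: ran_def)
    have cl: "dd \<alpha> a' b < of_rat \<kappa> / 2" using close[OF \<alpha>, of a' b] a' by' sy' by (simp add: domI)
    have e: "0 < eps \<alpha>" "eps \<alpha> < 1" using epsb \<alpha> by auto
    have xa: "x \<in> Apart \<alpha> a" using is_condD(11)[OF cp, of \<alpha> a] Rp \<alpha> a ax by auto
    have yb: "y \<in> Apart \<alpha> b" using is_condD(11)[OF cq, of \<alpha> b] Rq \<alpha> b by' by auto
    have xy: "x \<noteq> y" using A_disj[OF ab, of \<alpha>] xa yb by auto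
    show ?thesis
    proof (cases "a = a'")
      case True
      hence "x = y'" using ax a' by simp
      have xU: "x \<in> cu p - U" using xp xy sy' \<open>x = y'\<close> sig_U by auto
      have "\<pi> x = \<pi> y" using pi_p[OF xp] \<open>x = y'\<close> unfolding y'_def by simp
      hence Dxy: "D x y = c x" using xy pi_p[OF xp] unfolding D_def by simp
      have "good x (c x)" using C1[OF xU] .
      hence "dd \<alpha> a b < (1 + eps \<alpha>) * of_rat (c x) \<and> of_rat (c x) < (1 + eps \<alpha>) * dd \<alpha> a b"
        unfolding good_def using \<alpha> ax by' sy' \<open>x = y'\<close> by blast
      thus ?thesis using Dxy unfolding x_def y_def by simp
    next
      case False
      have "x \<noteq> y'" using bi_lipschitz_inj[OF blp[of \<alpha>], of a a'] Rp \<alpha> ax a' False by (auto simp: domI)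
      hence Dxy: "D x y = cd p x y'" using pi_p[OF xp] unfolding D_def y'_def by auto
      have sl: "of_rat \<kappa> < (1 + eps \<alpha>) * dd \<alpha> a a' - of_rat (cd p x y')"
          "of_rat \<kappa> < (1 + eps \<alpha>) * of_rat (cd p x y') - dd \<alpha> a a'"
        using slack[OF \<alpha>, of a a'] a' ax False unfolding eps_def by (auto simp: domI)
      have t1: "dd \<alpha> a a' \<le> dd \<alpha> a b + dd \<alpha> b a'" "dd \<alpha> a b \<le> dd \<alpha> a a' + dd \<alpha> a' b"
        "dd \<alpha> b a' = dd \<alpha> a' b" "0 \<le> dd \<alpha> a' b"
        by (rule ddm(4), rule ddm(4), rule ddm(3), rule ddm(1))
      have "(1 + eps \<alpha>) * dd \<alpha> a a' \<le> (1 + eps \<alpha>) * dd \<alpha> a b + (1 + eps \<alpha>) * dd \<alpha> a' b"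
        using t1 e by (simp add: distrib_left[symmetric])
      moreover have "(1 + eps \<alpha>) * dd \<alpha> a' b \<le> 2 * dd \<alpha> a' b"
        using e t1(4) by (intro mult_right_mono) auto
      ultimately show ?thesis using sl t1 cl Dxy unfolding x_def y_def by simp
    qed
  qed
  have cdr_p: "cd r x y = cd p x y" if "x \<in> cu p" "y \<in> cu p" for x y
    using K1 that unfolding r_simps by auto
  have cdr_q: "cd r x y = cd q x y" if "x \<in> cu q" "y \<in> cu q" for x y
    using K2 that unfolding r_simps by auto
  have cdr_D: "cd r x y = D x y" if "x \<in> Ur" "y \<in> Ur" for x y
    using that unfolding r_simps Ur_def by auto
  have cdr0: "cd r x x = 0" for x
    using Dzero unfolding r_simps Ur_def by auto
  have fp_empty: "cf p \<alpha> = Map.empty" if "\<alpha> \<notin> cw p" for \<alpha> using is_condD(5)[OF cp that] .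
  have fq_empty: "cf q \<alpha> = Map.empty" if "\<alpha> \<notin> cw q" for \<alpha> using is_condD(5)[OF cq that] .
  have fr_q: "cf r \<alpha> a = cf q \<alpha> a" if "a \<in> dom (cf q \<alpha>)" for \<alpha> a
    using that unfolding r_simps by auto
  have fr_nq: "cf r \<alpha> a = cf p \<alpha> a" if "a \<notin> dom (cf q \<alpha>)" for \<alpha> a
    using that unfolding r_simps by (auto simp: map_add_def split: option.splits)
  have fr_p: "cf r \<alpha> a = cf p \<alpha> a" if "a \<in> dom (cf p \<alpha>)" for \<alpha> a
  proof (cases "a \<in> dom (cf q \<alpha>)")
    case True
    hence "\<alpha> \<in> cw q" using fq_empty by fastforce
    moreover have "\<alpha> \<in> cw p" using that fp_empty by fastforce
    ultimately have "\<alpha> \<in> R" using Rdef by auto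
    thus ?thesis using val_eq[OF _ that True] fr_q[OF True] by simp
  qed (rule fr_nq)
  have domr: "dom (cf r \<alpha>) = dom (cf p \<alpha>) \<union> dom (cf q \<alpha>)" for \<alpha>
    unfolding r_simps by auto
  have ddpos: "0 < dd \<alpha> a b" if "a \<noteq> b" for \<alpha> a b using ddm[of \<alpha> a b] that by linarith
  have bl_R: "bi_lipschitz (1 + real_of_rat (ceps r \<alpha>)) (dd \<alpha>) (\<lambda>x y. real_of_rat (cd r x y)) (cf r \<alpha>)"
    if \<alpha>: "\<alpha> \<in> R" for \<alpha>
  proof (rule bi_lipschitzI2)
    have er: "real_of_rat (ceps r \<alpha>) = eps \<alpha>" using \<alpha> Rp unfolding r_simps eps_def by auto
    have eq: "real_of_rat (ceps q \<alpha>) = eps \<alpha>" using eps_eq[OF \<alpha>] unfolding eps_def by simp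
    have ranp: "the (cf p \<alpha> a) \<in> cu p" if "a \<in> dom (cf p \<alpha>)" for a
      using cond_ran_in[OF cp _ that] \<alpha> Rp by auto
    have ranq: "the (cf q \<alpha> a) \<in> cu q" if "a \<in> dom (cf q \<alpha>)" for a
      using cond_ran_in[OF cq _ that] \<alpha> Rq by auto
    fix a b assume a: "a \<in> dom (cf r \<alpha>)" and b: "b \<in> dom (cf r \<alpha>)" and ab: "a \<noteq> b"
    show "real_of_rat (cd r (the (cf r \<alpha> a)) (the (cf r \<alpha> b))) < (1 + real_of_rat (ceps r \<alpha>)) * dd \<alpha> a b \<and>
          dd \<alpha> a b < (1 + real_of_rat (ceps r \<alpha>)) * real_of_rat (cd r (the (cf r \<alpha> a)) (the (cf r \<alpha> b)))"
    proof (cases "a \<in> dom (cf p \<alpha>)"; cases "b \<in> dom (cf p \<alpha>)")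
      assume ap: "a \<in> dom (cf p \<alpha>)" and bp: "b \<in> dom (cf p \<alpha>)"
      show ?thesis using bi_lipschitzD[OF blp[of \<alpha>] ap bp ab] \<alpha> Rp fr_p[OF ap] fr_p[OF bp] cdr_p[OF ranp[OF ap] ranp[OF bp]] er
        by auto
    next
      assume ap: "a \<in> dom (cf p \<alpha>)" and bp: "b \<notin> dom (cf p \<alpha>)"
      hence bq: "b \<in> dom (cf q \<alpha>)" using b domr by auto
      have "cd r (the (cf r \<alpha> a)) (the (cf r \<alpha> b)) = D (the (cf p \<alpha> a)) (the (cf q \<alpha> b))"
        using fr_p[OF ap] fr_q[OF bq] cdr_D ranp[OF ap] ranq[OF bq] unfolding Ur_def by auto
      thus ?thesis using K3[OF \<alpha> ap bq ab] er by simp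
    next
      assume ap: "a \<notin> dom (cf p \<alpha>)" and bp: "b \<in> dom (cf p \<alpha>)"
      hence aq: "a \<in> dom (cf q \<alpha>)" using a domr by auto
      have "cd r (the (cf r \<alpha> a)) (the (cf r \<alpha> b)) = D (the (cf p \<alpha> b)) (the (cf q \<alpha> a))"
        using fr_p[OF bp] fr_q[OF aq] cdr_D ranp[OF bp] ranq[OF aq] Dsym unfolding Ur_def by auto
      moreover have "dd \<alpha> a b = dd \<alpha> b a" by (rule ddm(3))
      ultimately show ?thesis using K3[OF \<alpha> bp aq ab[symmetric]] er by simp
    next
      assume ap: "a \<notin> dom (cf p \<alpha>)" and bp: "b \<notin> dom (cf p \<alpha>)"
      hence aq: "a \<in> dom (cf q \<alpha>)" and bq: "b \<in> dom (cf q \<alpha>)" using a b domr by auto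
      show ?thesis using bi_lipschitzD[OF blq[of \<alpha>] aq bq ab] \<alpha> Rq fr_q[OF aq] fr_q[OF bq] cdr_q[OF ranq[OF aq] ranq[OF bq]] er eq
        by auto
    qed
  next
    show "\<And>a b. a \<noteq> b \<Longrightarrow> 0 < dd \<alpha> a b" by (rule ddpos)
    show "\<And>x. real_of_rat (cd r x x) = 0" using cdr0 by simp
  qed
  have bl_r: "bi_lipschitz (1 + real_of_rat (ceps r \<alpha>)) (dd \<alpha>) (\<lambda>x y. real_of_rat (cd r x y)) (cf r \<alpha>)"
    if \<alpha>: "\<alpha> \<in> cw r" for \<alpha>
  proof (cases "\<alpha> \<in> cw p"; cases "\<alpha> \<in> cw q")
    assume "\<alpha> \<in> cw p" "\<alpha> \<in> cw q"
    hence "\<alpha> \<in> R" using Rdef by auto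
    thus ?thesis by (rule bl_R)
  next
    assume ap: "\<alpha> \<in> cw p" and aq: "\<alpha> \<notin> cw q"
    have fe: "cf r \<alpha> = cf p \<alpha>" using fq_empty[OF aq] unfolding r_simps by simp
    have ee: "ceps r \<alpha> = ceps p \<alpha>" using ap unfolding r_simps by simp
    have "ran (cf p \<alpha>) \<subseteq> cu p" by (rule is_condD(10)[OF cp ap])
    hence "bi_lipschitz (1 + real_of_rat (ceps p \<alpha>)) (dd \<alpha>) (\<lambda>x y. real_of_rat (cd r x y)) (cf p \<alpha>)
         = bi_lipschitz (1 + real_of_rat (ceps p \<alpha>)) (dd \<alpha>) (\<lambda>x y. real_of_rat (cd p x y)) (cf p \<alpha>)"
      using cdr_p by (intro bi_lipschitz_cong) auto
    thus ?thesis using is_condD(12)[OF cp ap] fe ee by simp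
  next
    assume ap: "\<alpha> \<notin> cw p" and aq: "\<alpha> \<in> cw q"
    have fe: "cf r \<alpha> = cf q \<alpha>" using fp_empty[OF ap] unfolding r_simps by simp
    have ee: "ceps r \<alpha> = ceps q \<alpha>" using ap unfolding r_simps by simp
    have "ran (cf q \<alpha>) \<subseteq> cu q" by (rule is_condD(10)[OF cq aq])
    hence "bi_lipschitz (1 + real_of_rat (ceps q \<alpha>)) (dd \<alpha>) (\<lambda>x y. real_of_rat (cd r x y)) (cf q \<alpha>)
         = bi_lipschitz (1 + real_of_rat (ceps q \<alpha>)) (dd \<alpha>) (\<lambda>x y. real_of_rat (cd q x y)) (cf q \<alpha>)"
      using cdr_q by (intro bi_lipschitz_cong) auto
    thus ?thesis using is_condD(12)[OF cq aq] fe ee by simp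
  next
    assume "\<alpha> \<notin> cw p" "\<alpha> \<notin> cw q"
    thus ?thesis using \<alpha> unfolding r_simps by simp
  qed
  have r_vals: "the (cf r \<alpha> i) \<in> Apart \<alpha> i \<and> the (cf r \<alpha> i) \<in> cu r" if i: "i \<in> dom (cf r \<alpha>)" for \<alpha> i
  proof (cases "i \<in> dom (cf q \<alpha>)")
    case True
    hence aq: "\<alpha> \<in> cw q" using fq_empty by fastforce
    show ?thesis using fr_q[OF True] is_condD(11)[OF cq aq True] cond_ran_in[OF cq aq True]
      unfolding r_simps(2) by simp
  next
    case False
    hence ip: "i \<in> dom (cf p \<alpha>)" using i domr by auto
    hence ap: "\<alpha> \<in> cw p" using fp_empty by fastforce
    show ?thesis using fr_p[OF ip] is_condD(11)[OF cp ap ip] cond_ran_in[OF cp ap ip]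
      unfolding r_simps(2) by simp
  qed
  have r_cond: "is_cond Apart dd r"
    unfolding is_cond_def
  proof (intro conjI allI ballI impI)
    show "finite (cw r)" using is_condD(1)[OF cp] is_condD(1)[OF cq] unfolding r_simps by simp
    show "finite (cu r)" using is_condD(2)[OF cp] is_condD(2)[OF cq] unfolding r_simps by simp
    show "metric_on (cu r) (cd r)" by (rule r_metric)
    fix x y assume "x \<notin> cu r \<or> y \<notin> cu r"
    thus "cd r x y = 0" unfolding r_simps by auto
  next
    fix \<alpha> assume a: "\<alpha> \<notin> cw r"
    thus "cf r \<alpha> = Map.empty" using fp_empty fq_empty unfolding r_simps by simp
    show "ceps r \<alpha> = 0" using a is_condD(6)[OF cq] unfolding r_simps by simp
  next
    fix \<alpha> assume a: "\<alpha> \<in> cw r"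
    show "0 < ceps r \<alpha>" using a is_condD(7)[OF cp] is_condD(7)[OF cq] unfolding r_simps by auto
    show "ceps r \<alpha> < 1" using a is_condD(8)[OF cp] is_condD(8)[OF cq] unfolding r_simps by auto
    show "finite (dom (cf r \<alpha>))"
    proof -
      have "finite (dom (cf p \<alpha>))" using is_condD(9)[OF cp] fp_empty[of \<alpha>] by (cases "\<alpha> \<in> cw p") auto
      moreover have "finite (dom (cf q \<alpha>))" using is_condD(9)[OF cq] fq_empty[of \<alpha>] by (cases "\<alpha> \<in> cw q") auto
      ultimately show ?thesis using domr by simp
    qed
    show "ran (cf r \<alpha>) \<subseteq> cu r"
    proof
      fix z assume "z \<in> ran (cf r \<alpha>)"
      then obtain i where "cf r \<alpha> i = Some z" by (auto simp: ran_def)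
      thus "z \<in> cu r" using r_vals[of i \<alpha>] by (auto simp: domI)
    qed
    show "bi_lipschitz (1 + real_of_rat (ceps r \<alpha>)) (dd \<alpha>) (\<lambda>x y. real_of_rat (cd r x y)) (cf r \<alpha>)"
      by (rule bl_r[OF a])
    fix i assume "i \<in> dom (cf r \<alpha>)"
    thus "the (cf r \<alpha> i) \<in> Apart \<alpha> i" using r_vals by blast
  qed
  have le_p: "cond_le p r"
    unfolding cond_le_def
  proof (intro conjI ballI)
    show "cw p \<subseteq> cw r" "cu p \<subseteq> cu r" unfolding r_simps by auto
    fix x y assume "x \<in> cu p" "y \<in> cu p"
    thus "cd r x y = cd p x y" by (rule cdr_p)
  next
    fix \<alpha> assume "\<alpha> \<in> cw p"
    thus "ceps r \<alpha> = ceps p \<alpha>" unfolding r_simps by simp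
    show "cf p \<alpha> \<subseteq>\<^sub>m cf r \<alpha>" unfolding map_le_def using fr_p by simp
  qed
  have le_q: "cond_le q r"
    unfolding cond_le_def
  proof (intro conjI ballI)
    show "cw q \<subseteq> cw r" "cu q \<subseteq> cu r" unfolding r_simps by auto
    fix x y assume "x \<in> cu q" "y \<in> cu q"
    thus "cd r x y = cd q x y" by (rule cdr_q)
  next
    fix \<alpha> assume a: "\<alpha> \<in> cw q"
    show "ceps r \<alpha> = ceps q \<alpha>"
    proof (cases "\<alpha> \<in> cw p")
      case True
      hence "\<alpha> \<in> R" using a Rdef by auto
      thus ?thesis using True eps_eq unfolding r_simps by simp
    qed (simp add: r_simps)
    show "cf q \<alpha> \<subseteq>\<^sub>m cf r \<alpha>" unfolding r_simps by simp
  qed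
  show ?thesis unfolding cond_compatible_def using r_cond le_p le_q by blast
qed



lemma main_ccc:
  fixes A :: "'k \<Rightarrow> 'w set"
    and Apart :: "'k \<Rightarrow> 'w \<Rightarrow> 'w set"
    and dd :: "'k \<Rightarrow> 'w \<Rightarrow> 'w \<Rightarrow> real"
    and S :: "('k, 'w) cond set"
  assumes A_ad: "\<And>\<alpha> \<beta>. \<alpha> \<noteq> \<beta> \<Longrightarrow> finite (A \<alpha> \<inter> A \<beta>)"
    and A_part: "\<And>\<alpha>. A \<alpha> = (\<Union>i. Apart \<alpha> i)"
    and A_disj: "\<And>\<alpha> i j. i \<noteq> j \<Longrightarrow> Apart \<alpha> i \<inter> Apart \<alpha> j = {}"
    and A_ctbl: "\<And>\<alpha> i. countable (Apart \<alpha> i)"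
    and d_metric: "\<And>\<alpha>. metric_on UNIV (dd \<alpha>)"
    and d_sep: "\<And>\<alpha>. separable_metric (dd \<alpha>)"
    and anti: "cond_antichain Apart dd S"
  shows "countable S"
proof (rule ccontr)
  assume unc: "uncountable S"
  have condS: "\<And>p. p \<in> S \<Longrightarrow> is_cond Apart dd p"
    and inc: "\<And>p q. p \<in> S \<Longrightarrow> q \<in> S \<Longrightarrow> p \<noteq> q \<Longrightarrow> \<not> cond_compatible Apart dd p q"
    using anti unfolding cond_antichain_def by blast+
  have fin1: "\<forall>p\<in>S. finite (cw p)" using is_condD(1) condS by blast
  obtain T1 R where T1: "T1 \<subseteq> S" "uncountable T1" "\<And>p q. p \<in> T1 \<Longrightarrow> q \<in> T1 \<Longrightarrow> p \<noteq> q \<Longrightarrow> cw p \<inter> cw q = R"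
    using unc fin1 by (rule deltaE2) (rule that, assumption+)
  have fin2: "\<forall>p\<in>T1. finite (cu p)" using is_condD(2) condS T1(1) by blast
  obtain T2 U where T2: "T2 \<subseteq> T1" "uncountable T2" "\<And>p q. p \<in> T2 \<Longrightarrow> q \<in> T2 \<Longrightarrow> p \<noteq> q \<Longrightarrow> cu p \<inter> cu q = U"
    using T1(2) fin2 by (rule deltaE2) (rule that, assumption+)
  define g where "g p = Sigma (cw p) (\<lambda>\<alpha>. dom (cf p \<alpha>))" for p :: "('k,'w) cond"
  have fin3: "finite (g p)" if "p \<in> T2" for p :: "('k,'w) cond"
  proof -
    have "is_cond Apart dd p" using condS T1(1) T2(1) that by blast
    thus ?thesis unfolding g_def using is_condD(1,9) by (intro finite_SigmaI) auto
  qed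
  have fin3': "\<forall>p\<in>T2. finite (g p)" using fin3 by blast
  obtain T3 G where T3: "T3 \<subseteq> T2" "uncountable T3" "\<And>p q. p \<in> T3 \<Longrightarrow> q \<in> T3 \<Longrightarrow> p \<noteq> q \<Longrightarrow> g p \<inter> g q = G"
    using T2(2) fin3' by (rule deltaE2) (rule that, assumption+)
  have T3S: "T3 \<subseteq> S" using T1(1) T2(1) T3(1) by blast
  have T3c: "is_cond Apart dd p" if "p \<in> T3" for p using condS T3S that by blast
  have other: "\<exists>q\<in>T3. q \<noteq> p" for p :: "('k,'w) cond"
  proof -
    have "uncountable (T3 - {p})" using T3(2) by simp
    hence "T3 - {p} \<noteq> {}" by (metis countable_empty)
    thus ?thesis by blast
  qed
  have RT: "R \<subseteq> cw p" "U \<subseteq> cu p" "G \<subseteq> g p" if "p \<in> T3" for p :: "('k,'w) cond"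
  proof -
    obtain q where "q \<in> T3" "q \<noteq> p" using other by blast
    moreover have "p \<in> T2" "q \<in> T2" using that \<open>q \<in> T3\<close> T3(1) by auto
    moreover hence "p \<in> T1" "q \<in> T1" using T2(1) by auto
    ultimately have "cw p \<inter> cw q = R" "cu p \<inter> cu q = U" "g p \<inter> g q = G"
      using T1(3)[of p q] T2(3)[of p q] T3(3)[of p q] that by auto
    thus "R \<subseteq> cw p" "U \<subseteq> cu p" "G \<subseteq> g p" by auto
  qed
  obtain p0 where p0: "p0 \<in> T3" using other[of undefined] by blast
  have finR: "finite R" using RT(1)[OF p0] is_condD(1)[OF T3c[OF p0]] finite_subset by blast
  have finU: "finite U" using RT(2)[OF p0] is_condD(2)[OF T3c[OF p0]] finite_subset by blast
  have finG: "finite G" using RT(3)[OF p0] fin3 p0 T3(1) finite_subset by blast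
  obtain rs where rs: "set rs = R" using finite_list[OF finR] by blast
  obtain gs where gs: "set gs = G" using finite_list[OF finG] by blast
  obtain us where us: "set us = U" "distinct us" using finite_distinct_list[OF finU] by blast
  define ys where "ys p = (SOME l. distinct l \<and> set l = cu p - U)" for p :: "('k,'w) cond"
  define xs where "xs p = us @ ys p" for p :: "('k,'w) cond"
  define M where "M p = map (\<lambda>x. map (cd p x) (xs p)) (xs p)" for p :: "('k,'w) cond"
  define E where "E p = map (ceps p) rs" for p :: "('k,'w) cond"
  define V where "V p = map (\<lambda>(\<alpha>,a). cf p \<alpha> a) gs" for p :: "('k,'w) cond"
  define P where "P p = map (\<lambda>\<alpha>. map (\<lambda>x. x \<in> ran (cf p \<alpha>)) (xs p)) rs" for p :: "('k,'w) cond"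
  define kprop where "kprop p k \<longleftrightarrow> 0 < k \<and> (\<forall>s\<in>cu p. \<forall>t\<in>cu p. s \<noteq> t \<longrightarrow> k \<le> cd p s t) \<and>
    (\<forall>\<alpha>\<in>cw p. \<forall>a\<in>dom (cf p \<alpha>). \<forall>a'\<in>dom (cf p \<alpha>). a \<noteq> a' \<longrightarrow>
       of_rat k < (1 + of_rat (ceps p \<alpha>)) * dd \<alpha> a a' - of_rat (cd p (the (cf p \<alpha> a)) (the (cf p \<alpha> a'))) \<and>
       of_rat k < (1 + of_rat (ceps p \<alpha>)) * of_rat (cd p (the (cf p \<alpha> a)) (the (cf p \<alpha> a'))) - dd \<alpha> a a')" for p :: "('k,'w) cond" and k
  define \<kappa> where "\<kappa> p = (SOME k. kprop p k)" for p :: "('k,'w) cond"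
  define Dset where "Dset \<alpha> = (SOME D. countable D \<and> (\<forall>x. \<forall>e>0. \<exists>y\<in>D. dd \<alpha> x y < e))" for \<alpha>
  define ainv where "ainv p \<alpha> x = (SOME a. cf p \<alpha> a = Some x)" for p :: "('k,'w) cond" and \<alpha> x
  define ap where "ap p \<alpha> x = (SOME z. z \<in> Dset \<alpha> \<and> (x \<in> ran (cf p \<alpha>) \<longrightarrow> dd \<alpha> (ainv p \<alpha> x) z < of_rat (\<kappa> p) / 4))" for p :: "('k,'w) cond" and \<alpha> x
  define Ap where "Ap p = map (\<lambda>\<alpha>. map (ap p \<alpha>) (xs p)) rs" for p :: "('k,'w) cond"
  define h where "h p = (E p, V p, M p, P p, \<kappa> p, Ap p)" for p :: "('k,'w) cond"
  have kp: "kprop p (\<kappa> p)" if "p \<in> T3" for p :: "('k,'w) cond"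
    unfolding \<kappa>_def kprop_def by (rule someI_ex, rule kappa_exists[OF T3c[OF that]])
  have Ds: "countable (Dset \<alpha>) \<and> (\<forall>x. \<forall>e>0. \<exists>y\<in>Dset \<alpha>. dd \<alpha> x y < e)" for \<alpha>
    unfolding Dset_def by (rule someI_ex) (use d_sep[of \<alpha>] in \<open>simp add: separable_metric_def\<close>)
  have aps: "ap p \<alpha> x \<in> Dset \<alpha> \<and> (x \<in> ran (cf p \<alpha>) \<longrightarrow> dd \<alpha> (ainv p \<alpha> x) (ap p \<alpha> x) < of_rat (\<kappa> p) / 4)"
    if "p \<in> T3" for p :: "('k,'w) cond" and \<alpha> x
  proof -
    have "\<exists>z. z \<in> Dset \<alpha> \<and> (x \<in> ran (cf p \<alpha>) \<longrightarrow> dd \<alpha> (ainv p \<alpha> x) z < of_rat (\<kappa> p) / 4)"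
    proof (cases "x \<in> ran (cf p \<alpha>)")
      case True
      have "0 < \<kappa> p" using kp[OF that] unfolding kprop_def by blast
      hence "(0::real) < of_rat (\<kappa> p) / 4" by simp
      then obtain z where "z \<in> Dset \<alpha>" "dd \<alpha> (ainv p \<alpha> x) z < of_rat (\<kappa> p) / 4" using Ds[of \<alpha>] by blast
      thus ?thesis by blast
    next
      case False
      obtain z where "z \<in> Dset \<alpha>" using Ds[of \<alpha>] by (meson zero_less_one)
      thus ?thesis using False by blast
    qed
    thus ?thesis unfolding ap_def by (rule someI_ex)
  qed
  have ysp: "distinct (ys p) \<and> set (ys p) = cu p - U" if "p \<in> T3" for p :: "('k,'w) cond"
    unfolding ys_def by (rule someI_ex) (use finite_distinct_list[of "cu p - U"] is_condD(2)[OF T3c[OF that]] in blast)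
  have xsp: "distinct (xs p)" "set (xs p) = cu p" if "p \<in> T3" for p :: "('k,'w) cond"
    using ysp[OF that] us RT(2)[OF that] unfolding xs_def by auto
  define C where "C = (UNIV :: rat list set) \<times> lists (insert None (Some ` (\<Union>(\<alpha>,a)\<in>G. Apart \<alpha> a))) \<times>
     (UNIV :: rat list list set) \<times> (UNIV :: bool list list set) \<times> (UNIV :: rat set) \<times> lists (lists (\<Union>\<alpha>\<in>R. Dset \<alpha>))"
  have cC: "countable C"
  proof -
    have c1: "countable (UNIV :: rat list set)" "countable (UNIV :: rat list list set)"
      "countable (UNIV :: bool list list set)" "countable (UNIV :: rat set)" by (rule countableI_type)+
    have "countable (\<Union>(\<alpha>,a)\<in>G. Apart \<alpha> a)"
      using finG A_ctbl by (intro countable_UN) (auto intro: countable_finite)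
    hence c2: "countable (lists (insert None (Some ` (\<Union>(\<alpha>,a)\<in>G. Apart \<alpha> a))))" by simp
    have "countable (\<Union>\<alpha>\<in>R. Dset \<alpha>)" using finR Ds by (intro countable_UN) (auto intro: countable_finite)
    hence c3: "countable (lists (lists (\<Union>\<alpha>\<in>R. Dset \<alpha>)))" by simp
    show ?thesis unfolding C_def using c1 c2 c3 by simp
  qed
  have hC: "h p \<in> C" if pT: "p \<in> T3" for p :: "('k,'w) cond"
  proof -
    have "set (V p) \<subseteq> insert None (Some ` (\<Union>(\<alpha>,a)\<in>G. Apart \<alpha> a))"
    proof
      fix v assume "v \<in> set (V p)"
      then obtain \<alpha> a where aG: "(\<alpha>,a) \<in> G" and v: "v = cf p \<alpha> a" unfolding V_def gs[symmetric] by auto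
      show "v \<in> insert None (Some ` (\<Union>(\<alpha>,a)\<in>G. Apart \<alpha> a))"
      proof (cases v)
        case (Some w)
        hence ad: "a \<in> dom (cf p \<alpha>)" using v by auto
        hence "\<alpha> \<in> cw p" using is_condD(5)[OF T3c[OF pT]] by fastforce
        hence "w \<in> Apart \<alpha> a" using is_condD(11)[OF T3c[OF pT] _ ad] Some v by simp
        thus ?thesis using Some aG by blast
      qed simp
    qed
    moreover have "set (Ap p) \<subseteq> lists (\<Union>\<alpha>\<in>R. Dset \<alpha>)"
    proof
      fix l assume "l \<in> set (Ap p)"
      then obtain \<alpha> where \<alpha>: "\<alpha> \<in> R" and l: "l = map (ap p \<alpha>) (xs p)" unfolding Ap_def rs[symmetric] by auto
      have "set l \<subseteq> Dset \<alpha>" using aps[OF pT] l by auto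
      thus "l \<in> lists (\<Union>\<alpha>\<in>R. Dset \<alpha>)" using \<alpha> by auto
    qed
    ultimately show ?thesis unfolding h_def C_def by auto
  qed
  have hC': "\<forall>p\<in>T3. h p \<in> C" using hC by blast
  obtain c0 where c0: "uncountable {p\<in>T3. h p = c0}"
    using T3(2) hC' cC by (rule pigeonE2) (rule that)
  define T4 where "T4 = {p\<in>T3. h p = c0}"
  define F where "F = (\<Union>(\<alpha>,\<beta>)\<in>{(\<alpha>,\<beta>). \<alpha> \<in> R \<and> \<beta> \<in> R \<and> \<alpha> \<noteq> \<beta>}. A \<alpha> \<inter> A \<beta>)"
  define Bad where "Bad = {p\<in>T4. (cu p - U) \<inter> F \<noteq> {}}"
  have cBad: "countable Bad"
  proof -
    have finF: "finite F" unfolding F_def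
    proof (intro finite_UN_I)
      show "finite {(\<alpha>,\<beta>). \<alpha> \<in> R \<and> \<beta> \<in> R \<and> \<alpha> \<noteq> \<beta>}"
        by (rule finite_subset[of _ "R \<times> R"]) (use finR in auto)
      fix x assume "x \<in> {(\<alpha>,\<beta>). \<alpha> \<in> R \<and> \<beta> \<in> R \<and> \<alpha> \<noteq> \<beta>}"
      thus "finite (case x of (\<alpha>,\<beta>) \<Rightarrow> A \<alpha> \<inter> A \<beta>)" using A_ad by auto
    qed
    have sub: "Bad \<subseteq> (\<Union>x\<in>F. {p\<in>T4. x \<in> cu p - U})" unfolding Bad_def by blast
    have "countable {p\<in>T4. x \<in> cu p - U}" for x
    proof (cases "{p\<in>T4. x \<in> cu p - U} = {}")
      case False
      then obtain p1 where p1: "p1 \<in> T4" "x \<in> cu p1 - U" by blast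
      have "{p\<in>T4. x \<in> cu p - U} \<subseteq> {p1}"
      proof
        fix p2 assume "p2 \<in> {p\<in>T4. x \<in> cu p - U}"
        hence p2: "p2 \<in> T4" "x \<in> cu p2 - U" by auto
        show "p2 \<in> {p1}"
        proof (rule ccontr)
          assume "p2 \<notin> {p1}"
          hence "p2 \<noteq> p1" by simp
          moreover have "p1 \<in> T2" "p2 \<in> T2" using p1(1) p2(1) T3(1) unfolding T4_def by auto
          ultimately have "cu p2 \<inter> cu p1 = U" using T2(3) by blast
          thus False using p1 p2 by blast
        qed
      qed
      thus ?thesis using countable_subset by (metis countable_finite finite.emptyI finite_insert)
    next
      case True
      show ?thesis by (simp only: True countable_empty)
    qed
    hence "countable (\<Union>x\<in>F. {p\<in>T4. x \<in> cu p - U})" using finF by (intro countable_UN) (auto intro: countable_finite)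
    thus ?thesis using sub countable_subset by blast
  qed
  have "uncountable (T4 - Bad)" using c0 cBad unfolding T4_def by (rule uncountable_minus_countable)
  hence "T4 - Bad \<noteq> {}" by (metis countable_empty)
  then obtain p where p: "p \<in> T4" "p \<notin> Bad" by blast
  have "uncountable (T4 - {p})" using c0 unfolding T4_def by simp
  hence "T4 - {p} \<noteq> {}" by (metis countable_empty)
  then obtain q where q: "q \<in> T4" "q \<noteq> p" by blast
  have pT3: "p \<in> T3" "q \<in> T3" and hpq: "h p = h q" using p q unfolding T4_def by auto
  hence eqs: "E p = E q" "V p = V q" "M p = M q" "P p = P q" "\<kappa> p = \<kappa> q" "Ap p = Ap q"
    unfolding h_def by auto
  have cp: "is_cond Apart dd p" and cq: "is_cond Apart dd q" using T3c pT3 by auto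
  have pT2: "p \<in> T2" "q \<in> T2" using pT3 T3(1) by auto
  hence pT1: "p \<in> T1" "q \<in> T1" using T2(1) by auto
  have Rpq: "cw p \<inter> cw q = R" using T1(3)[OF pT1 q(2)[symmetric]] .
  have Upq: "cu p \<inter> cu q = U" using T2(3)[OF pT2 q(2)[symmetric]] .
  have Gpq: "g p \<inter> g q = G" using T3(3)[OF pT3 q(2)[symmetric]] .
  have len: "length (xs p) = length (xs q)"
  proof -
    have "length (M p) = length (M q)" using eqs by simp
    thus ?thesis unfolding M_def by simp
  qed
  have dxp: "distinct (xs p)" "distinct (xs q)" using xsp pT3 by auto
  obtain \<sigma> where sig: "bij_betw \<sigma> (set (xs p)) (set (xs q))" "\<And>i. i < length (xs p) \<Longrightarrow> \<sigma> (xs p ! i) = xs q ! i"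
    using dxp len by (rule list_sigma) (rule that, assumption+)
  have setp: "set (xs p) = cu p" and setq: "set (xs q) = cu q" using xsp pT3 by auto
  have xnth: "\<exists>i<length (xs p). x = xs p ! i" if "x \<in> cu p" for x
  proof -
    have "x \<in> set (xs p)" using that setp by simp
    thus ?thesis by (simp add: in_set_conv_nth eq_commute)
  qed
  have sig_bij: "bij_betw \<sigma> (cu p) (cu q)" using sig(1) setp setq by simp
  have sig_U: "\<sigma> x = x" if H: "x \<in> U" for x
  proof -
    obtain i where i: "i < length us" "x = us ! i" using H us(1) by (metis in_set_conv_nth)
    have "xs p ! i = x" "xs q ! i = x" using i unfolding xs_def by (simp_all add: nth_append)
    moreover have "i < length (xs p)" using i unfolding xs_def by simp
    ultimately show ?thesis using sig(2) by metis
  qed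
  have sig_iso: "cd q (\<sigma> x) (\<sigma> y) = cd p x y" if H: "x \<in> cu p" "y \<in> cu p" for x y
  proof -
    obtain i j where ij: "i < length (xs p)" "x = xs p ! i" "j < length (xs p)" "y = xs p ! j"
      using xnth[OF H(1)] xnth[OF H(2)] by blast
    have "M p ! i ! j = M q ! i ! j" using eqs by simp
    hence "cd p (xs p ! i) (xs p ! j) = cd q (xs q ! i) (xs q ! j)" using ij len unfolding M_def by simp
    thus ?thesis using ij sig(2) by simp
  qed
  have eps_eq: "ceps q \<alpha> = ceps p \<alpha>" if "\<alpha> \<in> R" for \<alpha>
    using eqs(1) that unfolding E_def rs[symmetric] by simp
  have val_eq: "cf p \<alpha> a = cf q \<alpha> a" if "\<alpha> \<in> R" "a \<in> dom (cf p \<alpha>)" "a \<in> dom (cf q \<alpha>)" for \<alpha> a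
  proof -
    have "(\<alpha>, a) \<in> g p \<inter> g q" using that RT(1)[OF pT3(1)] RT(1)[OF pT3(2)] unfolding g_def by auto
    hence "(\<alpha>, a) \<in> set gs" using Gpq gs by simp
    thus ?thesis using eqs(2) unfolding V_def by fastforce
  qed
  have ran_eq: "(x \<in> ran (cf p \<alpha>)) = (\<sigma> x \<in> ran (cf q \<alpha>))" if H: "\<alpha> \<in> R" "x \<in> cu p" for \<alpha> x
  proof -
    obtain i where i: "i < length (xs p)" "x = xs p ! i" using xnth[OF H(2)] by blast
    have "map (\<lambda>x. x \<in> ran (cf p \<alpha>)) (xs p) = map (\<lambda>x. x \<in> ran (cf q \<alpha>)) (xs q)"
      using eqs(4) H(1) unfolding P_def rs[symmetric] by simp
    hence "map (\<lambda>x. x \<in> ran (cf p \<alpha>)) (xs p) ! i = map (\<lambda>x. x \<in> ran (cf q \<alpha>)) (xs q) ! i" by simp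
    hence "(xs p ! i \<in> ran (cf p \<alpha>)) = (xs q ! i \<in> ran (cf q \<alpha>))" using i len by simp
    thus ?thesis using i sig(2) by simp
  qed
  have kpp: "kprop p (\<kappa> p)" using kp pT3 by auto
  have kpos: "0 < \<kappa> p" using kpp unfolding kprop_def by blast
  have kmin: "\<kappa> p \<le> cd p s t" if "s \<in> cu p" "t \<in> cu p" "s \<noteq> t" for s t
    using kpp that unfolding kprop_def by blast
  have slack: "of_rat (\<kappa> p) < (1 + of_rat (ceps p \<alpha>)) * dd \<alpha> a a' - of_rat (cd p (the (cf p \<alpha> a)) (the (cf p \<alpha> a'))) \<and>
       of_rat (\<kappa> p) < (1 + of_rat (ceps p \<alpha>)) * of_rat (cd p (the (cf p \<alpha> a)) (the (cf p \<alpha> a'))) - dd \<alpha> a a'"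
    if "\<alpha> \<in> R" "a \<in> dom (cf p \<alpha>)" "a' \<in> dom (cf p \<alpha>)" "a \<noteq> a'" for \<alpha> a a'
  proof -
    have "\<alpha> \<in> cw p" using that(1) RT(1)[OF pT3(1)] by auto
    thus ?thesis using kpp that(2-4) unfolding kprop_def by blast
  qed
  have ddm: "dd \<alpha> a b \<le> dd \<alpha> a z + dd \<alpha> z b" "dd \<alpha> a b = dd \<alpha> b a" for \<alpha> a b z
    using metric_onD[OF d_metric[of \<alpha>], of a b] by auto
  have ainv_eq: "ainv r \<alpha> x = a" if "r \<in> T3" "\<alpha> \<in> cw r" "cf r \<alpha> a = Some x" for r \<alpha> a x
  proof -
    have "cf r \<alpha> (ainv r \<alpha> x) = Some x" unfolding ainv_def by (rule someI[of _ a]) (rule that(3))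
    thus ?thesis using bi_lipschitz_inj[OF is_condD(12)[OF T3c[OF that(1)] that(2)], of "ainv r \<alpha> x" a] that(3)
      by (auto simp: domI)
  qed
  have close: "dd \<alpha> a b < of_rat (\<kappa> p) / 2"
    if \<alpha>: "\<alpha> \<in> R" and a: "a \<in> dom (cf p \<alpha>)" and b: "cf q \<alpha> b = Some (\<sigma> (the (cf p \<alpha> a)))" for \<alpha> a b
  proof -
    have \<alpha>pq: "\<alpha> \<in> cw p" "\<alpha> \<in> cw q" using \<alpha> RT(1) pT3 by auto
    define x where "x = the (cf p \<alpha> a)"
    have ax: "cf p \<alpha> a = Some x" using a unfolding x_def by auto
    have "x \<in> cu p" using cond_ran_in[OF cp \<alpha>pq(1) a] unfolding x_def .
    then obtain i where i: "i < length (xs p)" "x = xs p ! i" using xnth by blast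
    have sx: "\<sigma> x = xs q ! i" using sig(2) i by simp
    have "map (ap p \<alpha>) (xs p) = map (ap q \<alpha>) (xs q)" using eqs(6) \<alpha> unfolding Ap_def rs[symmetric] by simp
    hence "map (ap p \<alpha>) (xs p) ! i = map (ap q \<alpha>) (xs q) ! i" by simp
    hence zeq: "ap p \<alpha> x = ap q \<alpha> (\<sigma> x)" using i len sx by simp
    have "x \<in> ran (cf p \<alpha>)" using ax by (auto simp: ran_def)
    hence d1: "dd \<alpha> a (ap p \<alpha> x) < of_rat (\<kappa> p) / 4" using aps[OF pT3(1), of \<alpha> x] ainv_eq[OF pT3(1) \<alpha>pq(1) ax] by simp
    have "\<sigma> x \<in> ran (cf q \<alpha>)" using b unfolding x_def by (auto simp: ran_def)
    hence d2: "dd \<alpha> b (ap q \<alpha> (\<sigma> x)) < of_rat (\<kappa> q) / 4"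
      using aps[OF pT3(2), of \<alpha> "\<sigma> x"] ainv_eq[OF pT3(2) \<alpha>pq(2), of b "\<sigma> x"] b unfolding x_def by simp
    have "dd \<alpha> a b \<le> dd \<alpha> a (ap p \<alpha> x) + dd \<alpha> b (ap p \<alpha> x)" using ddm(1)[of \<alpha> a b "ap p \<alpha> x"] ddm(2)[of \<alpha> "ap p \<alpha> x" b] by simp
    thus ?thesis using d1 d2 zeq eqs(5) by simp
  qed
  have uniq: "\<alpha> = \<beta>" if u: "x \<in> cu p - U" "\<alpha> \<in> R" "\<beta> \<in> R" "x \<in> ran (cf p \<alpha>)" "x \<in> ran (cf p \<beta>)" for x \<alpha> \<beta>
  proof (rule ccontr)
    assume ne: "\<alpha> \<noteq> \<beta>"
    have inA: "x \<in> A \<gamma>" if g1: "\<gamma> \<in> R" and g2: "x \<in> ran (cf p \<gamma>)" for \<gamma>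
    proof -
      obtain a where a: "cf p \<gamma> a = Some x" using g2 by (auto simp: ran_def)
      have "\<gamma> \<in> cw p" using g1 RT(1)[OF pT3(1)] by auto
      hence "x \<in> Apart \<gamma> a" using is_condD(11)[OF cp, of \<gamma> a] a by (auto simp: domI)
      thus ?thesis using A_part[of \<gamma>] by blast
    qed
    have "x \<in> A \<alpha> \<inter> A \<beta>" using inA[OF u(2,4)] inA[OF u(3,5)] by blast
    hence "x \<in> F" using ne u(2,3) unfolding F_def by blast
    hence "p \<in> Bad" using u(1) p(1) unfolding Bad_def by blast
    thus False using p(2) by simp
  qed
  have compat: "cond_compatible Apart dd p q"
    by (rule amalg[OF cp cq Rpq Upq sig_bij sig_U sig_iso eps_eq val_eq ran_eq kpos kmin slack close uniq A_disj d_metric])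
  moreover have "p \<in> S" "q \<in> S" using p q T3S unfolding T4_def by auto
  ultimately show False using inc q(2) by blast
qed


theorem lemma5p4:
  fixes A :: "'k \<Rightarrow> 'w set"
    and Apart :: "'k \<Rightarrow> 'w \<Rightarrow> 'w set"
    and dd :: "'k \<Rightarrow> 'w \<Rightarrow> 'w \<Rightarrow> real"
    and S :: "('k, 'w) cond set"
  assumes omega1: "aleph1_type TYPE('w)"
    and omega3: "aleph3_type TYPE('k)"
    and A_card: "\<And>\<alpha>. (card_of (A \<alpha>), card_of (UNIV :: 'w set)) \<in> ordIso"
    and A_ad: "\<And>\<alpha> \<beta>. \<alpha> \<noteq> \<beta> \<Longrightarrow> finite (A \<alpha> \<inter> A \<beta>)"
    and A_part: "\<And>\<alpha>. A \<alpha> = (\<Union>i. Apart \<alpha> i)"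
    and A_disj: "\<And>\<alpha> i j. i \<noteq> j \<Longrightarrow> Apart \<alpha> i \<inter> Apart \<alpha> j = {}"
    and A_ctbl: "\<And>\<alpha> i. countable (Apart \<alpha> i) \<and> infinite (Apart \<alpha> i)"
    and d_metric: "\<And>\<alpha>. metric_on UNIV (dd \<alpha>)"
    and d_sep: "\<And>\<alpha>. separable_metric (dd \<alpha>)"
    and anti: "cond_antichain Apart dd S"
  shows "countable S"
proof -
  have "\<And>\<alpha> i. countable (Apart \<alpha> i)" using A_ctbl by blast
  show ?thesis
    by (rule main_ccc[of A Apart, OF A_ad A_part A_disj \<open>\<And>\<alpha> i. countable (Apart \<alpha> i)\<close> d_metric d_sep anti])
qed

end
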